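(* Let $\varepsilon>0$, $\delta\in(0,1)$, $\Delta>0$, and let $v$ be a real-valued function on datasets with sensitivity $\Delta$, i.e. $|v(D)-v(D')|\le\Delta$ for all neighboring datasets $D,D'$. Let $q_\delta$ denote the absolute value of the $\delta$-quantile of the Laplace distribution $\mathrm{Lap}(\Delta/\varepsilon)$, and set $\tau:=\Delta+q_\delta$. Consider the PositiveLaplaceMechanism which, on dataset $D$, samples $\eta\sim\mathrm{Lap}(\Delta/\varepsilon)$, sets $\tilde v:=v(D)+\tau+\eta$, and outputs $\max(v(D),\tilde v)$. Then this mechanism is $(\varepsilon,\delta)$-differentially private.
   Context: $\mathrm{Lap}(b)$ is the Laplace distribution with mean $0$ and scale $b$, density $\frac{1}{2b}e^{-|x|/b}$. The $\phi$-quantile of a distribution is the value $x$ with $\Pr[X\le x]=\phi$. Two datasets are neighboring if they differ by replacing the contribution of one individual. A randomized algorithm $M$ is $(\varepsilon,\delta)$-differentially private if for every pair of neighboring datasets $D,D'$ and every measurable set $S$, $\Pr[M(D)\in S]\le e^{\varepsilon}\Pr[M(D')\in S]+\delta$ and symmetrically with $D,D'$ swapped. *)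

theory Defs
  imports "HOL-Probability.Probability"
begin

definition laplace :: "real \<Rightarrow> real measure" where
  "laplace b = density lborel (\<lambda>x. ennreal (exp (- \<bar>x\<bar> / b) / (2 * b)))"

definition quantile :: "real measure \<Rightarrow> real \<Rightarrow> real" where
  "quantile P \<phi> = (THE x. measure P {..x} = \<phi>)"

definition differentially_private ::
  "('d \<Rightarrow> 'd \<Rightarrow> bool) \<Rightarrow> ('d \<Rightarrow> real measure) \<Rightarrow> real \<Rightarrow> real \<Rightarrow> bool" where
  "differentially_private nbr M \<epsilon> \<delta> \<longleftrightarrow>
     (\<forall>D D'. nbr D D' \<longrightarrow> (\<forall>S \<in> sets borel.
        measure (M D) S \<le> exp \<epsilon> * measure (M D') S + \<delta> \<and>
        measure (M D') S \<le> exp \<epsilon> * measure (M D) S + \<delta>))"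

definition positive_laplace_mechanism ::
  "('d \<Rightarrow> real) \<Rightarrow> real \<Rightarrow> real \<Rightarrow> real \<Rightarrow> 'd \<Rightarrow> real measure" where
  "positive_laplace_mechanism v \<Delta> \<epsilon> \<delta> D =
     (let b = \<Delta> / \<epsilon>;
          q = \<bar>quantile (laplace b) \<delta>\<bar>;
          \<tau> = \<Delta> + q
      in distr (laplace b) borel (\<lambda>\<eta>. max (v D) (v D + \<tau> + \<eta>)))"

end

theory Submission
  imports Defs "HOL-Real_Asymp.Real_Asymp" begin

lemma lap_R:
  assumes b: "b > 0" and a: "a \<ge> 0"
  shows "(\<integral>\<^sup>+x. ennreal (exp (- \<bar>x\<bar> / b) / (2 * b)) * indicator {a..} x \<partial>lborel) = ennreal (exp (- a / b) / 2)"
proof -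
  have "(\<integral>\<^sup>+x. ennreal (exp (- \<bar>x\<bar> / b) / (2 * b)) * indicator {a..} x \<partial>lborel)
      = (\<integral>\<^sup>+x. ennreal (exp (- x / b) / (2 * b)) * indicator {a..} x \<partial>lborel)"
    using a by (intro nn_integral_cong) (auto split: split_indicator)
  also have "\<dots> = ennreal (0 - (- exp (- a / b) / 2))"
  proof (rule nn_integral_FTC_atLeast)
    show "(\<lambda>x. exp (- x / b) / (2 * b)) \<in> borel_measurable borel" by measurable
    fix x assume "a \<le> x"
    show "((\<lambda>x. - exp (- x / b) / 2) has_real_derivative exp (- x / b) / (2 * b)) (at x)"
      using b by (auto intro!: derivative_eq_intros simp: field_simps)
    show "0 \<le> exp (- x / b) / (2 * b)" using b by simp
  next
    show "((\<lambda>x. - exp (- x / b) / 2) \<longlongrightarrow> 0) at_top" using b by real_asymp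
  qed
  also have "\<dots> = ennreal (exp (- a / b) / 2)" by simp
  finally show ?thesis .
qed

lemma lap_L:
  assumes b: "b > 0"
  shows "(\<integral>\<^sup>+y. ennreal (exp (- \<bar>y\<bar> / b) / (2 * b)) * indicator {..x} y \<partial>lborel)
       = (\<integral>\<^sup>+y. ennreal (exp (- \<bar>y\<bar> / b) / (2 * b)) * indicator {-x..} y \<partial>lborel)"
  by (subst nn_integral_real_affine[where c="-1" and t=0]) (auto intro!: nn_integral_cong split: split_indicator)

lemma lap_emeasure_le0:
  assumes b: "b > 0" and x: "x \<le> 0"
  shows "emeasure (laplace b) {..x} = ennreal (exp (x / b) / 2)"
  using lap_L[OF b, of x] lap_R[OF b, of "-x"] x
  by (simp add: laplace_def emeasure_density nn_integral_set_ennreal mult.commute)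

lemma lap_emeasure_gt:
  assumes b: "b > 0" and x: "x \<ge> 0"
  shows "emeasure (laplace b) {x<..} = ennreal (exp (- x / b) / 2)"
proof -
  have "emeasure (laplace b) {x<..} = (\<integral>\<^sup>+y. ennreal (exp (- \<bar>y\<bar> / b) / (2 * b)) * indicator {x<..} y \<partial>lborel)"
    by (simp add: laplace_def emeasure_density mult.commute)
  also have "\<dots> = (\<integral>\<^sup>+y. ennreal (exp (- \<bar>y\<bar> / b) / (2 * b)) * indicator {x..} y \<partial>lborel)"
    by (intro nn_integral_cong_AE eventually_mono[OF AE_lborel_singleton[of x]]) (auto split: split_indicator)
  finally show ?thesis using lap_R[OF b x] by simp
qed

lemma lap_prob_space:
  assumes b: "b > 0"
  shows "prob_space (laplace b)"
proof
  have "space (laplace b) = {..0} \<union> {0<..}" by (auto simp: laplace_def)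
  moreover have "emeasure (laplace b) ({..0} \<union> {0<..}) = emeasure (laplace b) {..0} + emeasure (laplace b) {0<..}"
    by (intro plus_emeasure[symmetric]) (auto simp: laplace_def)
  moreover have e: "ennreal (exp (0/b)/2) + ennreal (exp(-0/b)/2) = 1"
    by (subst ennreal_plus[symmetric]) auto
  ultimately show "emeasure (laplace b) (space (laplace b)) = 1"
    using lap_emeasure_le0[OF b order_refl] lap_emeasure_gt[OF b order_refl] by metis
qed

definition lapF :: "real \<Rightarrow> real \<Rightarrow> real" where
  "lapF b x = (if x \<le> 0 then exp (x / b) / 2 else 1 - exp (- x / b) / 2)"

lemma lap_cdf:
  assumes b: "b > 0"
  shows "measure (laplace b) {..x} = lapF b x"
proof -
  interpret prob_space "laplace b" by (rule lap_prob_space[OF b])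
  show ?thesis
  proof (cases "x \<le> 0")
    case True
    then show ?thesis using lap_emeasure_le0[OF b True] by (simp add: measure_def lapF_def)
  next
    case False
    have "prob {..x} = 1 - prob {x<..}"
      using prob_compl[of "{x<..}"] by (auto simp: laplace_def Compl_eq_Diff_UNIV[symmetric] simp del: prob_compl)
    also have "prob {x<..} = exp (- x / b) / 2"
      using lap_emeasure_gt[OF b, of x] False by (simp add: measure_def)
    finally show ?thesis using False by (simp add: lapF_def)
  qed
qed

lemma lapF_inj:
  assumes b: "b > 0" and eq: "lapF b x = lapF b y"
  shows "x = y"
proof -
  have l1: "exp (z / b) \<le> 1" if "z \<le> 0" for z
    using that b by (simp add: divide_nonpos_pos)
  have l2: "exp (- (z / b)) < 1" if "z > 0" for z
    using that b by simp
  show ?thesis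
  proof (cases "x \<le> 0"; cases "y \<le> 0")
    assume "x \<le> 0" "y \<le> 0" then show ?thesis using eq b by (simp add: lapF_def)
  next
    assume "\<not> x \<le> 0" "\<not> y \<le> 0" then show ?thesis using eq b by (simp add: lapF_def)
  next
    assume a: "x \<le> 0" "\<not> y \<le> 0"
    then have "exp (x / b) / 2 = 1 - exp (- (y / b)) / 2" using eq by (simp add: lapF_def)
    then show ?thesis using l1[of x] l2[of y] a by linarith
  next
    assume a: "\<not> x \<le> 0" "y \<le> 0"
    then have "exp (y / b) / 2 = 1 - exp (- (x / b)) / 2" using eq by (simp add: lapF_def)
    then show ?thesis using l1[of y] l2[of x] a by linarith
  qed
qed

lemma lap_quantile:
  assumes b: "b > 0" and d: "0 < \<delta>" "\<delta> < 1"
  shows "measure (laplace b) {..- \<bar>quantile (laplace b) \<delta>\<bar>} \<le> \<delta>"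
proof -
  define x0 where "x0 = (if \<delta> \<le> 1/2 then b * ln (2 * \<delta>) else - b * ln (2 * (1 - \<delta>)))"
  have F: "lapF b x0 = \<delta>"
  proof (cases "\<delta> \<le> 1/2")
    case True
    then have "x0 \<le> 0" using b d by (simp add: x0_def mult_nonneg_nonpos)
    then show ?thesis using True b d by (simp add: lapF_def x0_def)
  next
    case False
    then have "x0 > 0" using b d by (simp add: x0_def mult_pos_neg)
    then show ?thesis using False b d apply (simp add: lapF_def x0_def) by (simp add: field_simps)
  qed
  have "quantile (laplace b) \<delta> = x0"
    unfolding quantile_def
  proof (rule the_equality)
    show "measure (laplace b) {..x0} = \<delta>" using F lap_cdf[OF b] by simp
    fix x assume "measure (laplace b) {..x} = \<delta>"
    then show "x = x0" using F lap_cdf[OF b] lapF_inj[OF b] by metis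
  qed
  moreover have "lapF b (- \<bar>x0\<bar>) \<le> \<delta>"
  proof (cases "x0 \<le> 0")
    case True then show ?thesis using F by simp
  next
    case False
    then have "lapF b (- \<bar>x0\<bar>) \<le> 1/2" using b by (simp add: lapF_def divide_nonpos_pos)
    moreover have "1/2 < \<delta>" using False F b by (auto simp: lapF_def split: if_splits)
    ultimately show ?thesis by simp
  qed
  ultimately show ?thesis using lap_cdf[OF b] by simp
qed

lemma lap_shift:
  assumes b: "b > 0" and A[measurable]: "A \<in> sets borel" and d: "\<bar>d\<bar> \<le> e * b"
  shows "measure (laplace b) A \<le> exp e * measure (laplace b) {\<eta>. \<eta> + d \<in> A}"
proof -
  interpret prob_space "laplace b" by (rule lap_prob_space[OF b])
  define f where "f = (\<lambda>y::real. exp (- \<bar>y\<bar> / b) / (2 * b))"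
  have fm[measurable]: "f \<in> borel_measurable borel" unfolding f_def by measurable
  have B[measurable]: "{\<eta>. \<eta> + d \<in> A} \<in> sets borel" by measurable
  have pw: "f y \<le> exp e * f (y - d)" for y
  proof -
    have "- \<bar>y\<bar> / b \<le> e + - \<bar>y - d\<bar> / b"
      using b d by (simp add: field_simps)
    then have "exp (- \<bar>y\<bar> / b) \<le> exp e * exp (- \<bar>y - d\<bar> / b)"
      by (simp flip: exp_add)
    then show ?thesis using b unfolding f_def by (simp add: divide_right_mono)
  qed
  have "emeasure (laplace b) A = (\<integral>\<^sup>+y. ennreal (f y) * indicator A y \<partial>lborel)"
    by (simp add: laplace_def emeasure_density f_def)
  also have "\<dots> \<le> (\<integral>\<^sup>+y. ennreal (exp e) * (ennreal (f (y - d)) * indicator A y) \<partial>lborel)"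
    using pw by (intro nn_integral_mono) (auto simp: ennreal_mult'[symmetric] split: split_indicator intro!: ennreal_leI)
  also have "\<dots> = ennreal (exp e) * (\<integral>\<^sup>+y. ennreal (f (y - d)) * indicator A y \<partial>lborel)"
    by (intro nn_integral_cmult) measurable
  also have "(\<integral>\<^sup>+y. ennreal (f (y - d)) * indicator A y \<partial>lborel)
      = (\<integral>\<^sup>+y. ennreal (f y) * indicator {\<eta>. \<eta> + d \<in> A} y \<partial>lborel)"
    by (subst nn_integral_real_affine[where c=1 and t=d]) (auto intro!: nn_integral_cong split: split_indicator simp: add.commute)
  also have "\<dots> = emeasure (laplace b) {\<eta>. \<eta> + d \<in> A}"
    by (simp add: laplace_def emeasure_density f_def)
  finally have "ennreal (prob A) \<le> ennreal (exp e * prob {\<eta>. \<eta> + d \<in> A})"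
    by (simp add: emeasure_eq_measure ennreal_mult')
  then show ?thesis by (simp add: ennreal_le_iff)
qed

lemma one_dir:
  fixes \<epsilon> \<delta> \<Delta> u u' :: real
  assumes e: "\<epsilon> > 0" and D: "\<Delta> > 0" and d: "0 < \<delta>" "\<delta> < 1"
    and uu: "\<bar>u - u'\<bar> \<le> \<Delta>" and S[measurable]: "S \<in> sets borel"
    and q: "q = \<bar>quantile (laplace (\<Delta> / \<epsilon>)) \<delta>\<bar>" and t: "\<tau> = \<Delta> + q"
  shows "measure (distr (laplace (\<Delta> / \<epsilon>)) borel (\<lambda>\<eta>. max u (u + \<tau> + \<eta>))) S
     \<le> exp \<epsilon> * measure (distr (laplace (\<Delta> / \<epsilon>)) borel (\<lambda>\<eta>. max u' (u' + \<tau> + \<eta>))) S + \<delta>"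
proof -
  define b where "b = \<Delta> / \<epsilon>"
  have b: "b > 0" using e D by (simp add: b_def)
  interpret prob_space "laplace b" by (rule lap_prob_space[OF b])
  have sL: "sets (laplace b) = sets borel" by (simp add: laplace_def)
  have sp: "space (laplace b) = UNIV" by (simp add: laplace_def)
  have meas: "(\<lambda>\<eta>. max w (w + \<tau> + \<eta>)) \<in> measurable (laplace b) borel" for w
    unfolding measurable_cong_sets[OF sL refl] by measurable
  define m where "m = max u u'"
  define A where "A = {\<eta>. max u (u + \<tau> + \<eta>) \<in> S}"
  define A' where "A' = {\<eta>. max u' (u' + \<tau> + \<eta>) \<in> S}"
  define B where "B = {\<eta>. u + \<tau> + \<eta> \<in> S \<inter> {m<..}}"
  define B' where "B' = {\<eta>. \<eta> + (u' - u) \<in> B}"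
  have ev: "X \<in> sets borel \<Longrightarrow> X \<in> events" for X using sL by simp
  have [measurable]: "B \<in> sets borel" unfolding B_def by measurable
  have [measurable]: "B' \<in> sets borel" unfolding B'_def by measurable
  have [measurable]: "A \<in> sets borel" unfolding A_def by measurable
  have [measurable]: "A' \<in> sets borel" unfolding A'_def by measurable
  have eq1: "measure (distr (laplace b) borel (\<lambda>\<eta>. max u (u + \<tau> + \<eta>))) S = prob A"
    using meas by (simp add: measure_distr sp A_def vimage_def)
  have eq2: "measure (distr (laplace b) borel (\<lambda>\<eta>. max u' (u' + \<tau> + \<eta>))) S = prob A'"
    using meas by (simp add: measure_distr sp A'_def vimage_def)
  have "A \<subseteq> {..m - u - \<tau>} \<union> B"
    by (auto simp: A_def B_def m_def)
  then have "prob A \<le> prob ({..m - u - \<tau>} \<union> B)"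
    by (intro finite_measure_mono ev) auto
  also have "\<dots> \<le> prob {..m - u - \<tau>} + prob B"
    by (intro measure_subadditive ev) auto
  also have "prob {..m - u - \<tau>} \<le> prob {..-q}"
    using uu by (intro finite_measure_mono ev) (auto simp: m_def t)
  also have "prob {..-q} \<le> \<delta>"
    using lap_quantile[OF b d] by (simp add: q b_def)
  also have "prob B \<le> exp \<epsilon> * prob B'"
    unfolding B'_def using e uu by (intro lap_shift b) (auto simp: b_def)
  also have "prob B' \<le> prob A'"
    by (intro finite_measure_mono ev) (auto simp: B'_def B_def A'_def m_def ac_simps)
  finally show ?thesis using eq1 eq2 unfolding b_def by simp
qed

theorem theoremD1:
  fixes v :: "'d \<Rightarrow> real" and nbr :: "'d \<Rightarrow> 'd \<Rightarrow> bool"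
    and \<epsilon> \<delta> \<Delta> :: real
  assumes "\<epsilon> > 0" and "0 < \<delta>" and "\<delta> < 1" and "\<Delta> > 0"
    and sens: "\<And>D D'. nbr D D' \<Longrightarrow> \<bar>v D - v D'\<bar> \<le> \<Delta>"
  shows "differentially_private nbr (positive_laplace_mechanism v \<Delta> \<epsilon> \<delta>) \<epsilon> \<delta>"
  unfolding differentially_private_def positive_laplace_mechanism_def Let_def
proof (intro allI impI ballI conjI)
  fix D D' and S :: "real set" assume n: "nbr D D'" and S: "S \<in> sets borel"
  have s1: "\<bar>v D - v D'\<bar> \<le> \<Delta>" using sens[OF n] .
  then have s2: "\<bar>v D' - v D\<bar> \<le> \<Delta>" by linarith
  show "measure (distr (laplace (\<Delta> / \<epsilon>)) borel (\<lambda>\<eta>. max (v D) (v D + (\<Delta> + \<bar>quantile (laplace (\<Delta> / \<epsilon>)) \<delta>\<bar>) + \<eta>))) S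
    \<le> exp \<epsilon> * measure (distr (laplace (\<Delta> / \<epsilon>)) borel (\<lambda>\<eta>. max (v D') (v D' + (\<Delta> + \<bar>quantile (laplace (\<Delta> / \<epsilon>)) \<delta>\<bar>) + \<eta>))) S + \<delta>"
    by (rule one_dir[OF assms(1,4,2,3) s1 S refl refl])
  show "measure (distr (laplace (\<Delta> / \<epsilon>)) borel (\<lambda>\<eta>. max (v D') (v D' + (\<Delta> + \<bar>quantile (laplace (\<Delta> / \<epsilon>)) \<delta>\<bar>) + \<eta>))) S
    \<le> exp \<epsilon> * measure (distr (laplace (\<Delta> / \<epsilon>)) borel (\<lambda>\<eta>. max (v D) (v D + (\<Delta> + \<bar>quantile (laplace (\<Delta> / \<epsilon>)) \<delta>\<bar>) + \<eta>))) S + \<delta>"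
    by (rule one_dir[OF assms(1,4,2,3) s2 S refl refl])
qed

end
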